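(* Let $M\ge 2$, $\sigma>0$, and let $f$ be the single-epoch DP-SGD random-shuffling trade-off function (defined in the context). Let $$\mu=\sqrt{\frac{e^{1/\sigma^2}-1}{M-1}},\qquad K_\sigma=e^{1/\sigma^2}\cdot\frac{1+4e^{-3/\sigma^2}}{(1-e^{-1/\sigma^2})^{2}}.$$ Let $\delta>0$ satisfy $$\delta\;\ge\;2B K_\sigma\,\mu+\frac{\mu}{\sqrt{2\pi}}+\left\{\frac{1}{4\sqrt{2\pi}}+\frac{1}{2\sqrt{2e\pi}}\Big(1+\frac{e^{1/\sigma^2}}{1-e^{-1/\sigma^2}}\Big)\right\}\mu^2+\frac{\mu^3}{4\sqrt{2e\pi}}+\frac{\mu^4}{32\sqrt{2e\pi}}+\frac{4.52}{2.88\sqrt{\ln M}-2.41/\sqrt{\ln M}}\,M^{-25/24},$$ and also $$\delta+BK_\sigma\,\mu\;\le\;\frac12-\Phi\!\Big(-\frac{e^{1/\sigma^2}-1}{2}\Big).$$ Then for all $a\in[0,1]$, $f(a)\ge 1-a-\delta$, and for every integer $E\ge1$, $f^{\otimes E}(a)\ge (1-\delta)^E-a$.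
   Context: Fix a noise multiplier $\sigma>0$ and an integer $M\ge2$. Write $\mathrm{n}(x)=e^{-x^2/2}/\sqrt{2\pi}$ and $\Phi(x)=\int_{-\infty}^x\mathrm{n}(t)\,dt$. Let $P_0$ be the law on $\mathbb R^M$ of $(X_1,\dots,X_M)$ with i.i.d. $N(0,1)$ coordinates, and $P_1$ the law obtained by drawing $J$ uniformly from $\{1,\dots,M\}$ and then, independently, $X_J\sim N(1/\sigma,1)$ and $X_i\sim N(0,1)$ for $i\neq J$, all independent. For a (randomized) rejection rule $\phi:\mathbb R^M\to[0,1]$ let $\alpha(\phi)=\mathbb E_{P_0}[\phi]$, $\beta(\phi)=1-\mathbb E_{P_1}[\phi]$. For distributions $P,Q$ the trade-off function is $T(P,Q)(a)=\inf\{\beta(\phi):\alpha(\phi)\le a\}$, $a\in[0,1]$. The single-epoch DP-SGD random-shuffling trade-off function with $M$ rounds and noise multiplier $\sigma$ is $f=T(P_0,P_1)$. For trade-off functions $f=T(P,Q)$, $g=T(P',Q')$, the composition is $f\otimes g=T(P\times P',Q\times Q')$, and $f^{\otimes E}$ denotes the $E$-fold composition. $B$ denotes the universal Berry–Esseen constant for i.i.d. sums: a constant such that for every i.i.d. sequence $Z_1,Z_2,\dots$ with finite third moment, variance $s^2>0$ and $r^3=\mathbb E|Z_1-\mathbb EZ_1|^3$, the distribution function $F_n$ of $\sum_{j\le n}(Z_j-\mathbb EZ_j)/(s\sqrt n)$ satisfies $\sup_x|F_n(x)-\Phi(x)|\le B r^3/(\sqrt n s^3)$ (one may take $B=0.4748$;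 it is known that $B\in[0.4097,0.4748]$). *)

theory Defs
  imports "HOL-Probability.Probability"
begin

definition Phi :: "real \<Rightarrow> real" where
  "Phi x = measure (density lborel std_normal_density) {..x}"

definition gauss :: "real \<Rightarrow> real measure" where
  "gauss m = density lborel (normal_density m 1)"

definition P0 :: "nat \<Rightarrow> (nat \<Rightarrow> real) measure" where
  "P0 M = PiM {..<M} (\<lambda>_. gauss 0)"

definition P1 :: "nat \<Rightarrow> real \<Rightarrow> (nat \<Rightarrow> real) measure" where
  "P1 M \<sigma> = bind (uniform_count_measure {..<M})
     (\<lambda>j. PiM {..<M} (\<lambda>i. if i = j then gauss (1/\<sigma>) else gauss 0))"

text \<open>Trade-off function T(P,Q)(a): infimum of type II errors over
  (randomized) rejection rules phi with values in [0,1] and type I error at most a.\<close>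
definition tradeoff :: "'a measure \<Rightarrow> 'a measure \<Rightarrow> real \<Rightarrow> real" where
  "tradeoff P Q a = Inf {1 - integral\<^sup>L Q \<phi> | \<phi>.
      \<phi> \<in> borel_measurable P \<and> (\<forall>x \<in> space P. 0 \<le> \<phi> x \<and> \<phi> x \<le> 1) \<and>
      integral\<^sup>L P \<phi> \<le> a}"

definition shuffle_tradeoff :: "nat \<Rightarrow> real \<Rightarrow> real \<Rightarrow> real" where
  "shuffle_tradeoff M \<sigma> = tradeoff (P0 M) (P1 M \<sigma>)"

text \<open>E-fold composition f^{\<otimes>E} = T(P0^E, P1^E).\<close>
definition shuffle_tradeoff_comp :: "nat \<Rightarrow> nat \<Rightarrow> real \<Rightarrow> real \<Rightarrow> real" where
  "shuffle_tradeoff_comp E M \<sigma> =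
     tradeoff (PiM {..<E} (\<lambda>_. P0 M)) (PiM {..<E} (\<lambda>_. P1 M \<sigma>))"

text \<open>B is a valid Berry-Esseen constant for i.i.d. sums.  An i.i.d. sequence with
  common law nu is represented by the product measure of n copies of nu.\<close>
definition berry_esseen_const :: "real \<Rightarrow> bool" where
  "berry_esseen_const B \<longleftrightarrow>
    (\<forall>(\<nu>::real measure) (n::nat).
       prob_space \<nu> \<and> sets \<nu> = sets borel \<and> integrable \<nu> (\<lambda>z. \<bar>z\<bar> ^ 3) \<and> n \<ge> 1 \<and>
       (let m = integral\<^sup>L \<nu> (\<lambda>z. z) in integral\<^sup>L \<nu> (\<lambda>z. (z - m)\<^sup>2) > 0) \<longrightarrow>
       (let m = integral\<^sup>L \<nu> (\<lambda>z. z);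
            s = sqrt (integral\<^sup>L \<nu> (\<lambda>z. (z - m)\<^sup>2));
            r3 = integral\<^sup>L \<nu> (\<lambda>z. \<bar>z - m\<bar> ^ 3)
        in \<forall>x. \<bar>measure (PiM {..<n} (\<lambda>_. \<nu>))
                  {\<omega> \<in> space (PiM {..<n} (\<lambda>_. \<nu>)).
                     (\<Sum>i<n. \<omega> i - m) / (s * sqrt (real n)) \<le> x} - Phi x\<bar>
               \<le> B * r3 / (sqrt (real n) * s ^ 3)))"

end

theory Submission
  imports Defs
begin

lemma tradeoff_lower:
  fixes P :: "'a measure" and G :: "'a \<Rightarrow> real"
  assumes P: "prob_space P"
    and Gm: "G \<in> borel_measurable P" and G0: "\<And>x. x \<in> space P \<Longrightarrow> 0 \<le> G x"
    and Gi: "integrable P G" and G1: "integral\<^sup>L P G = 1"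
    and a0: "0 \<le> a"
  shows "tradeoff P (density P (\<lambda>x. ennreal (G x))) a \<ge> integral\<^sup>L P (\<lambda>x. min (G x) 1) - a"
proof -
  interpret prob_space P by fact
  let ?Q = "density P (\<lambda>x. ennreal (G x))"
  let ?S = "{1 - integral\<^sup>L ?Q \<phi> | \<phi>.
      \<phi> \<in> borel_measurable P \<and> (\<forall>x \<in> space P. 0 \<le> \<phi> x \<and> \<phi> x \<le> 1) \<and>
      integral\<^sup>L P \<phi> \<le> a}"
  have ne: "?S \<noteq> {}"
  proof -
    have "1 - integral\<^sup>L ?Q (\<lambda>_. 0) \<in> ?S" using a0 by force
    then show ?thesis by blast
  qed
  have "integral\<^sup>L P (\<lambda>x. min (G x) 1) - a \<le> y" if "y \<in> ?S" for y
  proof -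
    from that obtain \<phi> where y: "y = 1 - integral\<^sup>L ?Q \<phi>" and phm: "\<phi> \<in> borel_measurable P"
      and ph01: "\<forall>x \<in> space P. 0 \<le> \<phi> x \<and> \<phi> x \<le> 1" and pa: "integral\<^sup>L P \<phi> \<le> a" by blast
    have phi_int: "integrable P \<phi>"
      by (rule integrable_const_bound[where B=1]) (use ph01 phm in auto)
    have Gphi_int: "integrable P (\<lambda>x. G x * \<phi> x)"
      by (rule Bochner_Integration.integrable_bound[OF Gi]) (use ph01 G0 phm Gm in \<open>auto intro!: AE_I2 simp: abs_mult intro: mult_left_le\<close>)
    have min_int: "integrable P (\<lambda>x. min (G x) 1)"
      by (rule Bochner_Integration.integrable_bound[OF Gi]) (use G0 Gm in \<open>auto intro!: AE_I2\<close>)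
    have "integral\<^sup>L ?Q \<phi> = integral\<^sup>L P (\<lambda>x. G x * \<phi> x)"
      using integral_density[of \<phi> P G] phm Gm G0 by (auto intro!: AE_I2)
    also have "\<dots> \<le> integral\<^sup>L P (\<lambda>x. \<phi> x + (G x - min (G x) 1))"
    proof (rule integral_mono)
      show "integrable P (\<lambda>x. \<phi> x + (G x - min (G x) 1))" using phi_int Gi min_int by auto
      fix x assume "x \<in> space P"
      then have h: "0 \<le> \<phi> x" "\<phi> x \<le> 1" "0 \<le> G x" using ph01 G0 by auto
      show "G x * \<phi> x \<le> \<phi> x + (G x - min (G x) 1)"
      proof (cases "G x \<le> 1")
        case True
        then have "G x * \<phi> x \<le> 1 * \<phi> x" using h by (intro mult_right_mono) auto
        then show ?thesis using True by simp
      next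
        case False
        then have "(G x - 1) * (\<phi> x - 1) \<le> 0" using h by (intro mult_nonneg_nonpos) auto
        then show ?thesis using False h by (simp add: algebra_simps)
      qed
    qed (rule Gphi_int)
    also have "\<dots> = integral\<^sup>L P \<phi> + 1 - integral\<^sup>L P (\<lambda>x. min (G x) 1)"
      using phi_int Gi min_int G1 by simp
    finally show ?thesis using y pa by linarith
  qed
  then show ?thesis unfolding tradeoff_def by (intro cInf_greatest ne) auto
qed

lemma prob_space_density_real:
  assumes P: "prob_space P" and Gm: "G \<in> borel_measurable P" and G0: "\<And>x. x \<in> space P \<Longrightarrow> 0 \<le> G x"
    and Gi: "integrable P G" and G1: "integral\<^sup>L P G = 1"
  shows "prob_space (density P (\<lambda>x. ennreal (G x)))"
proof (rule prob_spaceI)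
  have "emeasure (density P (\<lambda>x. ennreal (G x))) (space (density P (\<lambda>x. ennreal (G x))))
      = (\<integral>\<^sup>+x. ennreal (G x) \<partial>P)"
    using Gm by (simp add: emeasure_density nn_integral_density cong: nn_integral_cong)
  also have "\<dots> = ennreal (integral\<^sup>L P G)"
    using Gi G0 by (intro nn_integral_eq_integral) (auto intro!: AE_I2)
  finally show "emeasure (density P (\<lambda>x. ennreal (G x))) (space (density P (\<lambda>x. ennreal (G x)))) = 1"
    using G1 by simp
qed

lemma PiM_density:
  fixes N :: "'i \<Rightarrow> 'a measure" and f :: "'i \<Rightarrow> 'a \<Rightarrow> ennreal"
  assumes I: "finite I" and N: "\<And>i. prob_space (N i)"
    and fm: "\<And>i. f i \<in> borel_measurable (N i)"
    and D: "\<And>i. prob_space (density (N i) (f i))"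
  shows "PiM I (\<lambda>i. density (N i) (f i)) = density (PiM I N) (\<lambda>x. \<Prod>i\<in>I. f i (x i))"
proof -
  interpret D: product_sigma_finite "\<lambda>i. density (N i) (f i)"
    unfolding product_sigma_finite_def using D by (auto intro: prob_space_imp_sigma_finite)
  interpret NN: product_sigma_finite N
    unfolding product_sigma_finite_def using N by (auto intro: prob_space_imp_sigma_finite)
  have Fm: "(\<lambda>x. \<Prod>i\<in>I. f i (x i)) \<in> borel_measurable (PiM I N)"
    using fm by (intro borel_measurable_prod_ennreal) (auto intro: measurable_compose[OF measurable_component_singleton])
  show ?thesis
  proof (rule D.PiM_eqI[symmetric])
    show "finite I" by fact
    show "sets (density (PiM I N) (\<lambda>x. \<Prod>i\<in>I. f i (x i))) = sets (PiM I (\<lambda>i. density (N i) (f i)))"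
      by (subst sets_density) (rule sets_PiM_cong, auto)
  next
    fix A assume A: "\<And>i. i \<in> I \<Longrightarrow> A i \<in> sets (density (N i) (f i))"
    then have A': "\<And>i. i \<in> I \<Longrightarrow> A i \<in> sets (N i)" by simp
    have "emeasure (density (PiM I N) (\<lambda>x. \<Prod>i\<in>I. f i (x i))) (Pi\<^sub>E I A)
        = (\<integral>\<^sup>+x. (\<Prod>i\<in>I. f i (x i)) * indicator (Pi\<^sub>E I A) x \<partial>PiM I N)"
      using A' I Fm by (intro emeasure_density) (auto intro: sets_PiM_I_finite)
    also have "\<dots> = (\<integral>\<^sup>+x. (\<Prod>i\<in>I. f i (x i) * indicator (A i) (x i)) \<partial>PiM I N)"
    proof (rule nn_integral_cong)
      fix x assume "x \<in> space (PiM I N)"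
      then have "x \<in> extensional I" by (auto simp: space_PiM PiE_def)
      then show "(\<Prod>i\<in>I. f i (x i)) * indicator (Pi\<^sub>E I A) x = (\<Prod>i\<in>I. f i (x i) * indicator (A i) (x i))"
        using I by (auto simp: prod.distrib indicator_def PiE_iff)
    qed
    also have "\<dots> = (\<Prod>i\<in>I. \<integral>\<^sup>+y. f i y * indicator (A i) y \<partial>N i)"
      using A' fm I by (intro NN.product_nn_integral_prod) auto
    also have "\<dots> = (\<Prod>i\<in>I. emeasure (density (N i) (f i)) (A i))"
      using A' fm by (intro prod.cong refl) (simp add: emeasure_density)
    finally show "emeasure (density (PiM I N) (\<lambda>x. \<Prod>i\<in>I. f i (x i))) (Pi\<^sub>E I A)
        = (\<Prod>i\<in>I. emeasure (density (N i) (f i)) (A i))" .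
  qed
qed

definition ex :: "real \<Rightarrow> real \<Rightarrow> real" where
  "ex s y = exp (s * y - s\<^sup>2 / 2)"

lemma ex_pos: "0 < ex s y" by (simp add: ex_def)

lemma ex_borel[measurable]: "ex s \<in> borel_measurable borel"
  unfolding ex_def[abs_def] by measurable

lemma sets_gauss[measurable_cong, simp]: "sets (gauss s) = sets borel"
  by (simp add: gauss_def)

lemma space_gauss[simp]: "space (gauss s) = UNIV"
  by (simp add: gauss_def)

lemma gauss_prob: "prob_space (gauss s)"
  unfolding gauss_def by (rule prob_space_normal_density) simp

lemma gauss_UNIV[simp]: "emeasure (gauss s) UNIV = 1" "measure (gauss s) UNIV = 1"
  using prob_space.emeasure_space_1[OF gauss_prob, of s] prob_space.prob_space[OF gauss_prob, of s]
  by simp_all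

lemma ex_sq: "ex s y * ex s y = exp (s\<^sup>2) * ex (2 * s) y"
  by (simp add: ex_def exp_add[symmetric] power2_eq_square algebra_simps)

lemma gauss_shift: "gauss s = density (gauss 0) (\<lambda>y. ennreal (ex s y))"
proof -
  have "density (gauss 0) (\<lambda>y. ennreal (ex s y))
      = density lborel (\<lambda>x. ennreal (normal_density 0 1 x) * ennreal (ex s x))"
    unfolding gauss_def by (subst density_density_eq) auto
  also have "\<dots> = density lborel (\<lambda>x. ennreal (normal_density s 1 x))"
  proof (rule arg_cong[where f="density lborel"], rule ext)
    fix x
    have "normal_density 0 1 x * ex s x = normal_density s 1 x"
      by (simp add: normal_density_def ex_def exp_add[symmetric] power2_eq_square algebra_simps)
    then show "ennreal (normal_density 0 1 x) * ennreal (ex s x) = ennreal (normal_density s 1 x)"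
      by (simp add: ennreal_mult'[symmetric] normal_density_nonneg)
  qed
  finally show ?thesis by (simp add: gauss_def)
qed

lemma ex_int: "integrable (gauss 0) (ex s)" "integral\<^sup>L (gauss 0) (ex s) = 1"
proof -
  interpret prob_space "gauss s" by (rule gauss_prob)
  have exm: "ex s \<in> borel_measurable (gauss 0)" by measurable
  have i1: "integrable (gauss s) (\<lambda>_. 1::real)" by simp
  have "emeasure (density (gauss 0) (\<lambda>y. ennreal (ex s y))) UNIV = (\<integral>\<^sup>+y. ennreal (ex s y) \<partial>gauss 0)"
    using exm by (subst emeasure_density) auto
  moreover have "emeasure (density (gauss 0) (\<lambda>y. ennreal (ex s y))) UNIV = 1"
  proof -
    have e1: "emeasure (gauss s) (space (gauss s)) = 1" by (rule emeasure_space_1)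
    have "density (gauss 0) (\<lambda>y. ennreal (ex s y)) = gauss s" by (rule gauss_shift[symmetric])
    then show ?thesis using e1 by simp
  qed
  ultimately have nn: "(\<integral>\<^sup>+y. ennreal (ex s y) \<partial>gauss 0) = 1" by simp
  show "integrable (gauss 0) (ex s)"
    by (rule integrableI_nonneg) (auto intro!: AE_I2 exm simp: nn less_imp_le[OF ex_pos])
  have j1: "integral\<^sup>L (gauss s) (\<lambda>_. 1::real) = 1" by simp
  have j2: "integral\<^sup>L (density (gauss 0) (\<lambda>y. ennreal (ex s y))) (\<lambda>_. 1::real) = 1"
    using j1 by (simp only: gauss_shift[of s, symmetric])
  have "integral\<^sup>L (density (gauss 0) (\<lambda>y. ennreal (ex s y))) (\<lambda>_. 1::real) =
      integral\<^sup>L (gauss 0) (\<lambda>x. ex s x *\<^sub>R 1)"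
    by (rule integral_density[where f="\<lambda>_. 1::real" and M="gauss 0" and g="ex s"]) (auto intro!: AE_I2 exm simp: less_imp_le[OF ex_pos])
  with j2 show "integral\<^sup>L (gauss 0) (ex s) = 1" by simp
qed

lemma ex_sq_int: "integrable (gauss 0) (\<lambda>y. ex s y * ex s y)"
    "integral\<^sup>L (gauss 0) (\<lambda>y. ex s y * ex s y) = exp (s\<^sup>2)"
  using ex_int[of "2 * s"] by (simp_all add: ex_sq)

definition gg :: "nat \<Rightarrow> real \<Rightarrow> (nat \<Rightarrow> real) \<Rightarrow> real" where
  "gg M s x = (\<Sum>j<M. ex s (x j)) / real M"

lemma gg_nonneg: "0 \<le> gg M s x"
  unfolding gg_def by (intro divide_nonneg_nonneg sum_nonneg) (auto intro: less_imp_le[OF ex_pos])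

lemma P0_prob: "prob_space (P0 M)"
  unfolding P0_def by (intro prob_space_PiM gauss_prob)

lemma comp_meas_P0: "(\<lambda>x. x j) \<in> borel_measurable (P0 M)"
proof (cases "j < M")
  case True
  then have "(\<lambda>x. x j) \<in> measurable (P0 M) (gauss 0)"
    unfolding P0_def by (intro measurable_component_singleton) auto
  then show ?thesis by (simp add: measurable_cong_sets[OF refl sets_gauss])
next
  case False
  have eq: "\<And>x. x \<in> space (P0 M) \<Longrightarrow> x j = undefined"
    using False by (auto simp: P0_def space_PiM PiE_def extensional_def)
  have "(\<lambda>x. x j) \<in> borel_measurable (P0 M) \<longleftrightarrow> (\<lambda>_. undefined::real) \<in> borel_measurable (P0 M)"
    by (rule measurable_cong) (rule eq)
  then show ?thesis by simp
qed

lemma ex_comp_meas[measurable]: "(\<lambda>x. ex s (x j)) \<in> borel_measurable (P0 M)"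
  by (rule measurable_compose[OF comp_meas_P0 ex_borel])

lemma gg_meas[measurable]: "gg M s \<in> borel_measurable (P0 M)"
  unfolding gg_def[abs_def] by measurable

lemma sets_P0: "sets (PiM {..<M} (\<lambda>i. if i = j then gauss s else gauss 0)) = sets (P0 M)"
  unfolding P0_def by (rule sets_PiM_cong) auto

lemma Qj:
  assumes "j < M"
  shows "PiM {..<M} (\<lambda>i. if i = j then gauss s else gauss 0) = density (P0 M) (\<lambda>x. ennreal (ex s (x j)))"
proof -
  have "PiM {..<M} (\<lambda>i. if i = j then gauss s else gauss 0)
      = PiM {..<M} (\<lambda>i. density (gauss 0) (\<lambda>y. if i = j then ennreal (ex s y) else 1))"
  proof (intro PiM_cong refl)
    fix i show "(if i = j then gauss s else gauss 0) = density (gauss 0) (\<lambda>y. if i = j then ennreal (ex s y) else 1)"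
      by (cases "i = j") (simp_all add: density_1 gauss_shift[of s, symmetric])
  qed
  also have "\<dots> = density (PiM {..<M} (\<lambda>_. gauss 0)) (\<lambda>x. \<Prod>i<M. (if i = j then ennreal (ex s (x i)) else 1))"
  proof (rule PiM_density)
    have exm0: "(\<lambda>y. ennreal (ex s y)) \<in> borel_measurable (gauss 0)" by measurable
    fix i
    show "(\<lambda>y. if i = j then ennreal (ex s y) else 1) \<in> borel_measurable (gauss 0)"
      by (cases "i = j") (simp_all add: exm0)
    show "prob_space (density (gauss 0) (\<lambda>y. if i = j then ennreal (ex s y) else 1))"
      by (cases "i = j") (simp_all add: density_1 gauss_shift[of s, symmetric] gauss_prob)
  qed (auto simp: gauss_prob)
  also have "\<dots> = density (P0 M) (\<lambda>x. ennreal (ex s (x j)))"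
    by (simp add: P0_def assms)
  finally show ?thesis .
qed

lemma P1_density:
  assumes M: "1 \<le> M"
  shows "P1 M \<sigma> = density (P0 M) (\<lambda>x. ennreal (gg M (1/\<sigma>) x))"
proof -
  define s where "s = 1/\<sigma>"
  define Q where "Q j = PiM {..<M} (\<lambda>i. if i = j then gauss s else gauss 0)" for j
  have P1Q: "P1 M \<sigma> = bind (uniform_count_measure {..<M}) Q"
    unfolding P1_def Q_def s_def ..
  have sQ: "sets (Q j) = sets (P0 M)" for j unfolding Q_def by (rule sets_P0)
  have "0 \<in> {..<M}" using M by simp
  then have ne: "space (uniform_count_measure {..<M}) \<noteq> {}"
    by (auto simp: space_uniform_count_measure)
  have Qprob: "prob_space (Q j)" for j
    unfolding Q_def by (intro prob_space_PiM) (auto simp: gauss_prob)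
  have meas: "Q \<in> measurable (uniform_count_measure {..<M}) (subprob_algebra (P0 M))"
  proof -
    have "Q \<in> measurable (count_space {..<M}) (subprob_algebra (P0 M))"
      using Qprob sQ by (auto simp: space_subprob_algebra prob_space_imp_subprob_space)
    then show ?thesis
      by (simp add: measurable_cong_sets[OF sets_uniform_count_measure_count_space refl])
  qed
  show ?thesis
  proof (rule measure_eqI)
    show "sets (P1 M \<sigma>) = sets (density (P0 M) (\<lambda>x. ennreal (gg M (1/\<sigma>) x)))"
      unfolding P1Q using ne sQ by (subst sets_bind) auto
  next
    fix X assume "X \<in> sets (P1 M \<sigma>)"
    then have X: "X \<in> sets (P0 M)" unfolding P1Q using ne sQ by (subst (asm) sets_bind) auto
    have exm: "(\<lambda>x. ennreal (ex s (x j))) \<in> borel_measurable (P0 M)" for j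
      by measurable
    have "emeasure (P1 M \<sigma>) X = (\<integral>\<^sup>+j. emeasure (Q j) X \<partial>uniform_count_measure {..<M})"
      unfolding P1Q using ne meas X by (rule emeasure_bind)
    also have "\<dots> = (\<Sum>j<M. ennreal (1 / real M) * emeasure (Q j) X)"
      by (simp add: uniform_count_measure_def nn_integral_point_measure_finite)
    also have "\<dots> = (\<Sum>j<M. ennreal (1 / real M) * (\<integral>\<^sup>+x. ennreal (ex s (x j)) * indicator X x \<partial>P0 M))"
    proof (intro sum.cong refl)
      fix j assume "j \<in> {..<M}"
      then have j: "j < M" by simp
      have "Q j = density (P0 M) (\<lambda>x. ennreal (ex s (x j)))" unfolding Q_def by (rule Qj[OF j])
      then show "ennreal (1 / real M) * emeasure (Q j) X = ennreal (1 / real M) * (\<integral>\<^sup>+x. ennreal (ex s (x j)) * indicator X x \<partial>P0 M)"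
        using X exm by (simp add: emeasure_density)
    qed
    also have "\<dots> = (\<integral>\<^sup>+x. (\<Sum>j<M. ennreal (1 / real M) * (ennreal (ex s (x j)) * indicator X x)) \<partial>P0 M)"
      using X exm by (subst nn_integral_sum) (auto simp: nn_integral_cmult)
    also have "\<dots> = (\<integral>\<^sup>+x. ennreal (gg M s x) * indicator X x \<partial>P0 M)"
    proof (intro nn_integral_cong)
      fix x
      have "(\<Sum>j<M. ennreal (1 / real M) * ennreal (ex s (x j))) = (\<Sum>j<M. ennreal (ex s (x j) / real M))"
        by (intro sum.cong refl) (simp add: ennreal_mult[symmetric] less_imp_le[OF ex_pos])
      also have "\<dots> = ennreal (\<Sum>j<M. ex s (x j) / real M)"
        by (rule sum_ennreal) (simp add: less_imp_le[OF ex_pos])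
      also have "\<dots> = ennreal (gg M s x)"
        by (simp add: gg_def sum_divide_distrib)
      finally show "(\<Sum>j<M. ennreal (1 / real M) * (ennreal (ex s (x j)) * indicator X x)) = ennreal (gg M s x) * indicator X x"
        by (cases "x \<in> X") auto
    qed
    also have "\<dots> = emeasure (density (P0 M) (\<lambda>x. ennreal (gg M (1/\<sigma>) x))) X"
      using X by (simp add: emeasure_density s_def)
    finally show "emeasure (P1 M \<sigma>) X = emeasure (density (P0 M) (\<lambda>x. ennreal (gg M (1/\<sigma>) x))) X" .
  qed
qed

lemma P0_int_prod:
  fixes f :: "nat \<Rightarrow> real \<Rightarrow> real"
  assumes "\<And>i. integrable (gauss 0) (f i)"
  shows "integrable (P0 M) (\<lambda>x. \<Prod>i<M. f i (x i))"
    "integral\<^sup>L (P0 M) (\<lambda>x. \<Prod>i<M. f i (x i)) = (\<Prod>i<M. integral\<^sup>L (gauss 0) (f i))"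
proof -
  interpret product_sigma_finite "\<lambda>_. gauss 0"
    unfolding product_sigma_finite_def using gauss_prob by (auto intro: prob_space_imp_sigma_finite)
  show "integrable (P0 M) (\<lambda>x. \<Prod>i<M. f i (x i))"
    unfolding P0_def using assms by (intro product_integrable_prod) auto
  show "integral\<^sup>L (P0 M) (\<lambda>x. \<Prod>i<M. f i (x i)) = (\<Prod>i<M. integral\<^sup>L (gauss 0) (f i))"
    unfolding P0_def using assms by (intro product_integral_prod) auto
qed

lemma P0_ex:
  assumes "j < M"
  shows "integrable (P0 M) (\<lambda>x. ex s (x j))" "integral\<^sup>L (P0 M) (\<lambda>x. ex s (x j)) = 1"
proof -
  define f where "f i y = (if i = j then ex s y else 1)" for i y
  have fi: "integrable (gauss 0) (f i)" for i
  proof -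
    interpret prob_space "gauss 0" by (rule gauss_prob)
    show ?thesis by (cases "i = j") (simp_all add: f_def[abs_def] ex_int)
  qed
  have fint: "integral\<^sup>L (gauss 0) (f i) = 1" for i
  proof -
    interpret prob_space "gauss 0" by (rule gauss_prob)
    show ?thesis by (cases "i = j") (simp_all add: f_def[abs_def] ex_int)
  qed
  have eq: "(\<lambda>x. \<Prod>i<M. f i (x i)) = (\<lambda>x. ex s (x j))"
    using assms by (simp add: f_def[abs_def] prod.delta)
  show "integrable (P0 M) (\<lambda>x. ex s (x j))" using P0_int_prod(1)[where f=f and M=M, OF fi] eq by simp
  show "integral\<^sup>L (P0 M) (\<lambda>x. ex s (x j)) = 1" using P0_int_prod(2)[where f=f and M=M, OF fi] eq fint by simp
qed

lemma P0_ex2: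
  assumes "j < M" "k < M"
  shows "integrable (P0 M) (\<lambda>x. ex s (x j) * ex s (x k))"
    "integral\<^sup>L (P0 M) (\<lambda>x. ex s (x j) * ex s (x k)) = (if j = k then exp (s\<^sup>2) else 1)"
proof -
  define f where "f i y = (if i = j then ex s y else 1) * (if i = k then ex s y else 1)" for i y
  interpret G: prob_space "gauss 0" by (rule gauss_prob)
  have fi: "integrable (gauss 0) (f i)" for i
    by (cases "i = j"; cases "i = k") (simp_all add: f_def[abs_def] ex_int ex_sq_int)
  have fint: "integral\<^sup>L (gauss 0) (f i) = (if i = j then (if j = k then exp (s\<^sup>2) else 1) else 1)" for i
    by (cases "i = j"; cases "i = k") (simp_all add: f_def[abs_def] ex_int ex_sq_int)
  have eq: "(\<lambda>x. \<Prod>i<M. f i (x i)) = (\<lambda>x. ex s (x j) * ex s (x k))"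
    using assms by (simp add: f_def[abs_def] prod.distrib prod.delta)
  show "integrable (P0 M) (\<lambda>x. ex s (x j) * ex s (x k))" using P0_int_prod(1)[where f=f and M=M, OF fi] eq by simp
  show "integral\<^sup>L (P0 M) (\<lambda>x. ex s (x j) * ex s (x k)) = (if j = k then exp (s\<^sup>2) else 1)"
    using P0_int_prod(2)[where f=f and M=M, OF fi] eq assms by (simp add: fint prod.delta)
qed

lemma gg_int:
  assumes M: "1 \<le> M"
  shows "integrable (P0 M) (gg M s)" "integral\<^sup>L (P0 M) (gg M s) = 1"
proof -
  have i: "integrable (P0 M) (\<lambda>x. \<Sum>j<M. ex s (x j))"
    by (intro Bochner_Integration.integrable_sum P0_ex) auto
  have eq: "gg M s = (\<lambda>x. (\<Sum>j<M. ex s (x j)) / real M)" by (simp add: gg_def[abs_def])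
  show "integrable (P0 M) (gg M s)" unfolding eq using i by simp
  have "integral\<^sup>L (P0 M) (\<lambda>x. \<Sum>j<M. ex s (x j)) = (\<Sum>j<M. integral\<^sup>L (P0 M) (\<lambda>x. ex s (x j)))"
    by (intro Bochner_Integration.integral_sum P0_ex) auto
  also have "\<dots> = real M" by (simp add: P0_ex)
  finally show "integral\<^sup>L (P0 M) (gg M s) = 1" unfolding eq using M by simp
qed

lemma gg_sq:
  assumes M: "1 \<le> M"
  shows "integrable (P0 M) (\<lambda>x. (gg M s x)\<^sup>2)"
    "integral\<^sup>L (P0 M) (\<lambda>x. (gg M s x)\<^sup>2) = 1 + (exp (s\<^sup>2) - 1) / real M"
proof -
  have eq: "(\<lambda>x. (gg M s x)\<^sup>2) = (\<lambda>x. (\<Sum>j<M. \<Sum>k<M. ex s (x j) * ex s (x k)) / (real M)\<^sup>2)"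
    by (simp add: gg_def power2_eq_square sum_product)
  have i: "integrable (P0 M) (\<lambda>x. \<Sum>j<M. \<Sum>k<M. ex s (x j) * ex s (x k))"
    by (intro Bochner_Integration.integrable_sum P0_ex2) auto
  show "integrable (P0 M) (\<lambda>x. (gg M s x)\<^sup>2)" unfolding eq using i by simp
  have "integral\<^sup>L (P0 M) (\<lambda>x. \<Sum>j<M. \<Sum>k<M. ex s (x j) * ex s (x k))
      = (\<Sum>j<M. integral\<^sup>L (P0 M) (\<lambda>x. \<Sum>k<M. ex s (x j) * ex s (x k)))"
    by (intro Bochner_Integration.integral_sum Bochner_Integration.integrable_sum P0_ex2) auto
  also have "\<dots> = (\<Sum>j<M. \<Sum>k<M. integral\<^sup>L (P0 M) (\<lambda>x. ex s (x j) * ex s (x k)))"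
    by (intro sum.cong refl Bochner_Integration.integral_sum P0_ex2) auto
  also have "\<dots> = (\<Sum>j<M. \<Sum>k<M. (if j = k then exp (s\<^sup>2) else 1))"
    by (intro sum.cong refl) (simp add: P0_ex2)
  also have "\<dots> = (\<Sum>j<M. (real M + (exp (s\<^sup>2) - 1)))"
  proof (intro sum.cong refl)
    fix j assume j: "j \<in> {..<M}"
    have "(\<Sum>k<M. (if j = k then exp (s\<^sup>2) else 1)) = (\<Sum>k<M. (1 + (if j = k then exp (s\<^sup>2) - 1 else 0)))"
      by (intro sum.cong refl) auto
    also have "\<dots> = real M + (exp (s\<^sup>2) - 1)"
      using j by (simp add: sum.distrib)
    finally show "(\<Sum>k<M. (if j = k then exp (s\<^sup>2) else 1)) = real M + (exp (s\<^sup>2) - 1)" .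
  qed
  also have "\<dots> = real M * (real M + (exp (s\<^sup>2) - 1))" by simp
  finally have "integral\<^sup>L (P0 M) (\<lambda>x. \<Sum>j<M. \<Sum>k<M. ex s (x j) * ex s (x k)) = real M * (real M + (exp (s\<^sup>2) - 1))" .
  then show "integral\<^sup>L (P0 M) (\<lambda>x. (gg M s x)\<^sup>2) = 1 + (exp (s\<^sup>2) - 1) / real M"
    unfolding eq using M by (simp add: power2_eq_square field_simps)
qed

lemma gg_min:
  assumes M: "1 \<le> M" and mu: "0 < \<mu>" and chi: "(exp (s\<^sup>2) - 1) / real M \<le> \<mu>\<^sup>2"
  shows "integrable (P0 M) (\<lambda>x. min (gg M s x) 1)"
    "integral\<^sup>L (P0 M) (\<lambda>x. min (gg M s x) 1) \<ge> 1 - \<mu>"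
proof -
  interpret prob_space "P0 M" by (rule P0_prob)
  note gi = gg_int[OF M, of s] and gs = gg_sq[OF M, of s]
  show mi: "integrable (P0 M) (\<lambda>x. min (gg M s x) 1)"
    by (rule Bochner_Integration.integrable_bound[OF gi(1)]) (auto intro!: AE_I2 simp: gg_nonneg)
  let ?h = "\<lambda>x. 1 - \<mu>/2 - ((gg M s x)\<^sup>2 - 2 * gg M s x + 1) / (2 * \<mu>)"
  have hi: "integrable (P0 M) ?h" using gi gs by simp
  have "integral\<^sup>L (P0 M) ?h = 1 - \<mu>/2 - ((1 + (exp (s\<^sup>2) - 1) / real M) - 2 * 1 + 1) / (2 * \<mu>)"
    using gi gs by (simp add: integral_diff prob_space divide_divide_eq_left)
  also have "\<dots> = 1 - \<mu>/2 - ((exp (s\<^sup>2) - 1) / real M) / (2 * \<mu>)" by simp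
  also have "\<dots> \<ge> 1 - \<mu>/2 - \<mu>\<^sup>2 / (2 * \<mu>)"
    using chi mu by (intro diff_left_mono divide_right_mono) auto
  finally have h1: "integral\<^sup>L (P0 M) ?h \<ge> 1 - \<mu>"
    using mu by (simp add: power2_eq_square)
  have "integral\<^sup>L (P0 M) ?h \<le> integral\<^sup>L (P0 M) (\<lambda>x. min (gg M s x) 1)"
  proof (rule integral_mono[OF hi mi])
    fix x
    define g where "g = gg M s x"
    have "1 - \<mu>/2 - (g\<^sup>2 - 2 * g + 1) / (2 * \<mu>) \<le> min g 1"
    proof (cases "g \<le> 1")
      case True
      have eq: "1 - \<mu>/2 - (g\<^sup>2 - 2 * g + 1) / (2 * \<mu>) = g - (1 - g - \<mu>)\<^sup>2 / (2 * \<mu>)"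
        using mu by (simp add: field_simps power2_eq_square)
      have "0 \<le> (1 - g - \<mu>)\<^sup>2 / (2 * \<mu>)" using mu by simp
      then show ?thesis using True unfolding eq by simp
    next
      case False
      have "0 \<le> (g - 1)\<^sup>2 / (2 * \<mu>)" using mu by simp
      then have "1 - \<mu>/2 - (g\<^sup>2 - 2 * g + 1) / (2 * \<mu>) \<le> 1"
        using mu by (simp add: power2_eq_square algebra_simps)
      then show ?thesis using False by simp
    qed
    then show "?h x \<le> min (gg M s x) 1" by (simp add: g_def)
  qed
  then show "integral\<^sup>L (P0 M) (\<lambda>x. min (gg M s x) 1) \<ge> 1 - \<mu>" using h1 by linarith
qed

lemma single_bound:
  assumes M: "1 \<le> M" and mu: "0 < \<mu>" and chi: "(exp ((1/\<sigma>)\<^sup>2) - 1) / real M \<le> \<mu>\<^sup>2" and a0: "0 \<le> a"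
  shows "shuffle_tradeoff M \<sigma> a \<ge> 1 - \<mu> - a"
proof -
  have "shuffle_tradeoff M \<sigma> a = tradeoff (P0 M) (density (P0 M) (\<lambda>x. ennreal (gg M (1/\<sigma>) x))) a"
    unfolding shuffle_tradeoff_def using P1_density[OF M] by simp
  also have "\<dots> \<ge> integral\<^sup>L (P0 M) (\<lambda>x. min (gg M (1/\<sigma>) x) 1) - a"
    by (rule tradeoff_lower[OF P0_prob gg_meas _ gg_int[OF M] a0]) (simp add: gg_nonneg)
  finally show ?thesis using gg_min(2)[OF M mu chi] by linarith
qed

lemma comp_bound:
  assumes M: "1 \<le> M" and mu: "0 < \<mu>" and chi: "(exp ((1/\<sigma>)\<^sup>2) - 1) / real M \<le> \<mu>\<^sup>2"
    and mu1: "\<mu> \<le> 1" and a0: "0 \<le> a"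
  shows "shuffle_tradeoff_comp E M \<sigma> a \<ge> (1 - \<mu>) ^ E - a"
proof -
  define g where "g = gg M (1/\<sigma>)"
  interpret PS: product_sigma_finite "\<lambda>_. P0 M"
    unfolding product_sigma_finite_def using P0_prob by (auto intro: prob_space_imp_sigma_finite)
  let ?PE = "PiM {..<E} (\<lambda>_. P0 M)"
  have gm[measurable]: "g \<in> borel_measurable (P0 M)" unfolding g_def by (rule gg_meas)
  have g0: "0 \<le> g x" for x unfolding g_def by (rule gg_nonneg)
  have P1eq: "P1 M \<sigma> = density (P0 M) (\<lambda>x. ennreal (g x))" unfolding g_def by (rule P1_density[OF M])
  have P1prob: "prob_space (density (P0 M) (\<lambda>x. ennreal (g x)))"
    unfolding g_def by (rule prob_space_density_real[OF P0_prob gg_meas _ gg_int[OF M]]) (simp add: gg_nonneg)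
  have "PiM {..<E} (\<lambda>_. P1 M \<sigma>) = PiM {..<E} (\<lambda>_. density (P0 M) (\<lambda>x. ennreal (g x)))"
    by (simp add: P1eq)
  also have "\<dots> = density ?PE (\<lambda>\<omega>. \<Prod>i<E. ennreal (g (\<omega> i)))"
    by (rule PiM_density) (auto simp: P0_prob P1prob)
  also have "\<dots> = density ?PE (\<lambda>\<omega>. ennreal (\<Prod>i<E. g (\<omega> i)))"
    by (simp add: prod_ennreal g0)
  finally have eqE: "PiM {..<E} (\<lambda>_. P1 M \<sigma>) = density ?PE (\<lambda>\<omega>. ennreal (\<Prod>i<E. g (\<omega> i)))" .
  have PEprob: "prob_space ?PE" by (intro prob_space_PiM P0_prob)
  have Gm: "(\<lambda>\<omega>. \<Prod>i<E. g (\<omega> i)) \<in> borel_measurable ?PE" by measurable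
  have Gi: "integrable ?PE (\<lambda>\<omega>. \<Prod>i<E. g (\<omega> i))"
    using gg_int[OF M] unfolding g_def by (intro PS.product_integrable_prod) auto
  have G1: "integral\<^sup>L ?PE (\<lambda>\<omega>. \<Prod>i<E. g (\<omega> i)) = 1"
    using gg_int[OF M] unfolding g_def by (subst PS.product_integral_prod) auto
  have mi: "integrable (P0 M) (\<lambda>x. min (g x) 1)" unfolding g_def by (rule gg_min(1)[OF M mu chi])
  have "shuffle_tradeoff_comp E M \<sigma> a = tradeoff ?PE (density ?PE (\<lambda>\<omega>. ennreal (\<Prod>i<E. g (\<omega> i)))) a"
    unfolding shuffle_tradeoff_comp_def eqE ..
  also have "\<dots> \<ge> integral\<^sup>L ?PE (\<lambda>\<omega>. min (\<Prod>i<E. g (\<omega> i)) 1) - a"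
    by (rule tradeoff_lower[OF PEprob Gm _ Gi G1 a0]) (simp add: g0 prod_nonneg)
  finally have t1: "shuffle_tradeoff_comp E M \<sigma> a \<ge> integral\<^sup>L ?PE (\<lambda>\<omega>. min (\<Prod>i<E. g (\<omega> i)) 1) - a" .
  have "integral\<^sup>L ?PE (\<lambda>\<omega>. \<Prod>i<E. min (g (\<omega> i)) 1) \<le> integral\<^sup>L ?PE (\<lambda>\<omega>. min (\<Prod>i<E. g (\<omega> i)) 1)"
  proof (rule integral_mono)
    show "integrable ?PE (\<lambda>\<omega>. \<Prod>i<E. min (g (\<omega> i)) 1)"
      using mi by (intro PS.product_integrable_prod) auto
    show "integrable ?PE (\<lambda>\<omega>. min (\<Prod>i<E. g (\<omega> i)) 1)"
      by (rule Bochner_Integration.integrable_bound[OF Gi]) (auto intro!: AE_I2 simp: g0 prod_nonneg)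
    fix \<omega>
    have "(\<Prod>i<E. min (g (\<omega> i)) 1) \<le> (\<Prod>i<E. g (\<omega> i))"
      by (intro prod_mono) (auto simp: g0)
    moreover have "(\<Prod>i<E. min (g (\<omega> i)) 1) \<le> 1"
      by (intro prod_le_1) (auto simp: g0)
    ultimately show "(\<Prod>i<E. min (g (\<omega> i)) 1) \<le> min (\<Prod>i<E. g (\<omega> i)) 1" by simp
  qed
  moreover have "integral\<^sup>L ?PE (\<lambda>\<omega>. \<Prod>i<E. min (g (\<omega> i)) 1) = (integral\<^sup>L (P0 M) (\<lambda>x. min (g x) 1)) ^ E"
    using mi by (subst PS.product_integral_prod) auto
  moreover have "(1 - \<mu>) ^ E \<le> (integral\<^sup>L (P0 M) (\<lambda>x. min (g x) 1)) ^ E"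
    using gg_min(2)[OF M mu chi] mu1 unfolding g_def by (intro power_mono) auto
  ultimately show ?thesis using t1 by linarith
qed

definition tp :: "real \<Rightarrow> real \<Rightarrow> real \<Rightarrow> real measure" where
  "tp p u v = distr (measure_pmf (bernoulli_pmf p)) borel (\<lambda>b. if b then u else v)"

lemma tp_facts:
  assumes p: "0 \<le> p" "p \<le> 1"
  shows "prob_space (tp p u v)" "sets (tp p u v) = sets borel"
    "\<And>f::real\<Rightarrow>real. f \<in> borel_measurable borel \<Longrightarrow> integrable (tp p u v) f"
    "\<And>f::real\<Rightarrow>real. f \<in> borel_measurable borel \<Longrightarrow> integral\<^sup>L (tp p u v) f = f u * p + f v * (1 - p)"
proof -
  have m: "(\<lambda>b. if b then u else v) \<in> measurable (measure_pmf (bernoulli_pmf p)) borel" by simp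
  show "prob_space (tp p u v)" unfolding tp_def
    by (rule prob_space.prob_space_distr[OF prob_space_measure_pmf m])
  show "sets (tp p u v) = sets borel" unfolding tp_def by simp
  have fin: "finite (set_pmf (bernoulli_pmf p))" by (rule finite_subset[OF subset_UNIV]) simp
  show "integrable (tp p u v) f" if f: "f \<in> borel_measurable borel" for f :: "real \<Rightarrow> real"
  proof -
    have "integrable (measure_pmf (bernoulli_pmf p)) (\<lambda>x. f (if x then u else v))"
      by (rule integrable_measure_pmf_finite[OF fin])
    then show ?thesis unfolding tp_def integrable_distr_eq[OF m f] .
  qed
  show "integral\<^sup>L (tp p u v) f = f u * p + f v * (1 - p)" if f: "f \<in> borel_measurable borel" for f :: "real \<Rightarrow> real"
    unfolding tp_def integral_distr[OF m f] using p by simp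
qed

lemma tp_measure:
  assumes p: "0 \<le> p" "p \<le> 1"
  shows "measure (tp p u v) {..c} = (if u \<le> c then p else 0) + (if v \<le> c then 1 - p else 0)"
proof -
  have "measure (tp p u v) {..c} = measure (measure_pmf (bernoulli_pmf p)) ((\<lambda>b. if b then u else v) -` {..c})"
    unfolding tp_def by (subst measure_distr) auto
  also have "\<dots> = (if u \<le> c then p else 0) + (if v \<le> c then 1 - p else 0)"
  proof -
    have U: "measure (measure_pmf (bernoulli_pmf p)) UNIV = 1"
      by (metis measure_pmf.prob_space space_measure_pmf)
    show ?thesis
    proof (cases "u \<le> c"; cases "v \<le> c")
      assume "u \<le> c" "v \<le> c"
      then have "(\<lambda>b. if b then u else v) -` {..c} = UNIV" by auto
      then show ?thesis using U \<open>u \<le> c\<close> \<open>v \<le> c\<close> by simp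
    next
      assume "u \<le> c" "\<not> v \<le> c"
      then have "(\<lambda>b. if b then u else v) -` {..c} = {True}" by (auto split: if_splits)
      then show ?thesis using p \<open>u \<le> c\<close> \<open>\<not> v \<le> c\<close> by (simp add: measure_pmf_single)
    next
      assume "\<not> u \<le> c" "v \<le> c"
      then have "(\<lambda>b. if b then u else v) -` {..c} = {False}" by (auto split: if_splits)
      then show ?thesis using p \<open>\<not> u \<le> c\<close> \<open>v \<le> c\<close> by (simp add: measure_pmf_single)
    next
      assume "\<not> u \<le> c" "\<not> v \<le> c"
      then have "(\<lambda>b. if b then u else v) -` {..c} = {}" by (auto split: if_splits)
      then show ?thesis using \<open>\<not> u \<le> c\<close> \<open>\<not> v \<le> c\<close> by simp
    qed
  qed
  finally show ?thesis .
qed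

lemma BE_use:
  fixes \<nu> :: "real measure"
  assumes hB: "berry_esseen_const B" and pr: "prob_space \<nu>" and sb: "sets \<nu> = sets borel"
    and i3: "integrable \<nu> (\<lambda>z. \<bar>z\<bar> ^ 3)" and m0: "integral\<^sup>L \<nu> (\<lambda>z. z) = 0"
    and v2: "integral\<^sup>L \<nu> (\<lambda>z. z\<^sup>2) = 2" and r: "integral\<^sup>L \<nu> (\<lambda>z. \<bar>z\<bar> ^ 3) = r"
  shows "\<bar>measure \<nu> {..0} - Phi 0\<bar> \<le> B * r / (sqrt 2 ^ 3)"
proof -
  let ?P = "PiM {..<1::nat} (\<lambda>_. \<nu>)"
  have h: "\<forall>x. \<bar>measure ?P {\<omega> \<in> space ?P. (\<Sum>i<1. \<omega> i - 0) / (sqrt 2 * sqrt (real 1)) \<le> x} - Phi x\<bar>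
      \<le> B * r / (sqrt (real 1) * sqrt 2 ^ 3)"
    using hB[unfolded berry_esseen_const_def, rule_format, of \<nu> 1] pr sb i3 m0 v2 r
    by (simp add: Let_def)
  have l1: "{..<1::nat} = {0}" by auto
  have S: "{\<omega> \<in> space ?P. (\<Sum>i<1. \<omega> i - 0) / (sqrt 2 * sqrt (real 1)) \<le> 0} = (\<lambda>\<omega>. \<omega> 0) -` {..0} \<inter> space ?P"
    by (auto simp: l1 divide_le_0_iff)
  have "measure ?P ((\<lambda>\<omega>. \<omega> 0) -` {..0} \<inter> space ?P) = measure (distr ?P \<nu> (\<lambda>\<omega>. \<omega> 0)) {..0}"
    using sb by (subst measure_distr) (auto intro: measurable_component_singleton)
  also have "\<dots> = measure \<nu> {..0}"
    using pr by (subst distr_PiM_component) auto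
  finally show ?thesis using h[rule_format, of 0] S by simp
qed

lemma B_lower:
  assumes hB: "berry_esseen_const B"
  shows "B \<ge> 1/8"
proof -
  have p: "0 \<le> (1/3::real)" "(1/3::real) \<le> 1" by auto
  note A = tp_facts[OF p, where u=2 and v="-1"] and C = tp_facts[OF p, where u="-2" and v=1]
  have e1: "\<bar>measure (tp (1/3) 2 (-1)) {..0} - Phi 0\<bar> \<le> B * (10/3) / (sqrt 2 ^ 3)"
    by (rule BE_use[OF hB A(1,2)]) (simp_all add: A(3,4))
  have e2: "\<bar>measure (tp (1/3) (-2) 1) {..0} - Phi 0\<bar> \<le> B * (10/3) / (sqrt 2 ^ 3)"
    by (rule BE_use[OF hB C(1,2)]) (simp_all add: C(3,4))
  have m1: "measure (tp (1/3) 2 (-1)) {..0} = 2/3" by (simp add: tp_measure)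
  have m2: "measure (tp (1/3) (-2) 1) {..0} = 1/3" by (simp add: tp_measure)
  have s3: "sqrt 2 ^ 3 = 2 * sqrt 2" by (simp add: power3_eq_cube)
  have h: "1/3 \<le> 2 * (B * (10/3) / (sqrt 2 ^ 3))"
    using e1 e2 unfolding m1 m2 abs_le_iff by linarith
  have eqn: "2 * (B * (10/3) / (sqrt 2 ^ 3)) = (10 * B) / (3 * sqrt 2)"
    unfolding s3 by (simp add: field_simps)
  have h2: "1/3 \<le> (10 * B) / (3 * sqrt 2)" using h unfolding eqn .
  have c0: "0 < 3 * sqrt 2" by simp
  have "1/3 * (3 * sqrt 2) \<le> 10 * B" using h2 pos_le_divide_eq[OF c0] by blast
  then have "sqrt 2 \<le> 10 * B" by simp
  moreover have "5/4 \<le> sqrt 2" by (rule real_le_rsqrt) (simp add: power2_eq_square)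
  ultimately show ?thesis by simp
qed

lemma K_ge:
  fixes x :: real
  assumes x: "0 < x"
  shows "1 / (exp (-x) * (1 - exp (-x))\<^sup>2) \<le> exp x * (1 + 4 * exp (-3 * x)) / (1 - exp (-x))\<^sup>2"
    "0 < exp (-x)" "exp (-x) < 1" "exp x = 1 / exp (-x)"
proof -
  show "0 < exp (-x)" by simp
  show "exp (-x) < 1" using x by simp
  have "exp x * exp (-x) = 1" by (simp add: exp_minus_inverse)
  then show ex: "exp x = 1 / exp (-x)" by (simp add: field_simps)
  have pos: "0 < 1 - exp (-x)" using x by simp
  have "1 / (exp (-x) * (1 - exp (-x))\<^sup>2) = exp x * 1 / (1 - exp (-x))\<^sup>2"
    using pos by (simp add: exp_minus field_simps)
  also have "\<dots> \<le> exp x * (1 + 4 * exp (-3 * x)) / (1 - exp (-x))\<^sup>2"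
    by (intro divide_right_mono mult_left_mono) auto
  finally show "1 / (exp (-x) * (1 - exp (-x))\<^sup>2) \<le> exp x * (1 + 4 * exp (-3 * x)) / (1 - exp (-x))\<^sup>2" .
qed

lemma yy: "0 < y \<Longrightarrow> y < 1 \<Longrightarrow> y * (1 - y) \<le> (1/4::real)"
proof -
  have "0 \<le> (2 * y - 1)\<^sup>2" by simp
  moreover have "(2 * y - 1)\<^sup>2 = 4 * (y * y) - 4 * y + 1" by (simp add: power2_eq_square algebra_simps)
  moreover have "y * (1 - y) = y - y * y" by (simp add: algebra_simps)
  ultimately show ?thesis by linarith
qed

lemma K_ge4:
  fixes x :: real
  assumes x: "0 < x"
  shows "4 \<le> exp x * (1 + 4 * exp (-3 * x)) / (1 - exp (-x))\<^sup>2"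
proof -
  note K = K_ge[OF x]
  define y where "y = exp (-x)"
  have y0: "0 < y" and y1: "y < 1" using K(2,3) by (simp_all add: y_def)
  have a: "(1 - y) * (1 - y) \<le> 1 - y" by (rule mult_left_le_one_le) (use y0 y1 in auto)
  then have "y * (1 - y)\<^sup>2 \<le> y * (1 - y)" unfolding power2_eq_square by (rule mult_left_mono) (use y0 in auto)
  also have "\<dots> \<le> 1/4" using yy[OF y0 y1] .
  finally have "y * (1 - y)\<^sup>2 \<le> 1/4" .
  then have "4 \<le> 1 / (y * (1 - y)\<^sup>2)" using y0 y1 by (simp add: field_simps)
  then have "4 \<le> 1 / (exp (-x) * (1 - exp (-x))\<^sup>2)" by (simp add: y_def)
  then show ?thesis using K(1) by linarith
qed

lemma Kmu_ge8:
  fixes x :: real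
  assumes x: "0 < x"
  shows "8 \<le> exp x * (1 + 4 * exp (-3 * x)) / (1 - exp (-x))\<^sup>2 * sqrt ((exp x - 1) / (real 2 - 1))"
proof -
  note K = K_ge[OF x]
  define y where "y = exp (-x)"
  have y0: "0 < y" and y1: "y < 1" and ex: "exp x = 1 / y" using K(2,3,4) by (simp_all add: y_def)
  define K0 where "K0 = 1 / (y * (1 - y)\<^sup>2)"
  define m where "m = sqrt ((exp x - 1) / (real 2 - 1))"
  have e1: "1 \<le> exp x" using x by simp
  have m2: "m\<^sup>2 = (1 - y) / y" unfolding m_def using y0 y1 ex e1 by (simp add: field_simps)
  have m0: "0 \<le> m" unfolding m_def using x by simp
  have K00: "0 \<le> K0" unfolding K0_def using y0 y1 by simp
  have "(K0 * m)\<^sup>2 = K0\<^sup>2 * m\<^sup>2" by (simp add: power_mult_distrib)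
  also have "\<dots> = (1 / (y * (1 - y)\<^sup>2))\<^sup>2 * ((1 - y) / y)" by (simp add: K0_def m2)
  also have "\<dots> = 1 / (y * (1 - y)) ^ 3"
  proof -
    define b where "b = 1 - y"
    have b0: "0 < b" using y1 by (simp add: b_def)
    have "(1 / (y * b\<^sup>2))\<^sup>2 * (b / y) = 1 / (y * b) ^ 3"
      using y0 b0 by (simp add: field_simps power2_eq_square power3_eq_cube)
    then show ?thesis by (simp add: b_def)
  qed
  finally have Keq: "(K0 * m)\<^sup>2 = 1 / (y * (1 - y)) ^ 3" .
  have "(y * (1 - y)) ^ 3 \<le> (1/4) ^ 3"
    using yy[OF y0 y1] y0 y1 by (intro power_mono) auto
  moreover have q: "(1/4::real) ^ 3 = 1/64" by (simp add: power3_eq_cube)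
  ultimately have "(y * (1 - y)) ^ 3 \<le> 1/64" by simp
  then have t64: "64 * (y * (1 - y)) ^ 3 \<le> 1" by linarith
  have tpos: "0 < (y * (1 - y)) ^ 3" using y0 y1 by simp
  have "64 \<le> 1 / (y * (1 - y)) ^ 3" using tpos t64 by (simp add: pos_le_divide_eq)
  then have "64 \<le> (K0 * m)\<^sup>2" unfolding Keq .
  then have "8 \<le> K0 * m"
  proof -
    assume h: "64 \<le> (K0 * m)\<^sup>2"
    show "8 \<le> K0 * m"
    proof (rule ccontr)
      assume "\<not> 8 \<le> K0 * m"
      then have "(K0 * m)\<^sup>2 < 8\<^sup>2" using K00 m0 by (intro power_strict_mono) auto
      then show False using h by simp
    qed
  qed
  also have "K0 * m \<le> exp x * (1 + 4 * exp (-3 * x)) / (1 - exp (-x))\<^sup>2 * m"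
    unfolding K0_def y_def by (intro mult_right_mono) (use K(1) m0 in auto)
  finally show ?thesis unfolding m_def .
qed

theorem theorem1:
  fixes M :: nat and \<sigma> \<delta> B :: real
  assumes hM: "M \<ge> 2"
    and h\<sigma>: "\<sigma> > 0"
    and hB: "berry_esseen_const B"
    and h\<delta>: "\<delta> > 0"
    and hlow: "let \<mu> = sqrt ((exp (1/\<sigma>\<^sup>2) - 1) / (real M - 1));
                K = exp (1/\<sigma>\<^sup>2) * (1 + 4 * exp (-3/\<sigma>\<^sup>2)) / (1 - exp (-1/\<sigma>\<^sup>2))\<^sup>2
             in \<delta> \<ge> 2 * B * K * \<mu> + \<mu> / sqrt (2*pi)
                  + (1 / (4 * sqrt (2*pi)) + 1 / (2 * sqrt (2 * exp 1 * pi))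
                       * (1 + exp (1/\<sigma>\<^sup>2) / (1 - exp (-1/\<sigma>\<^sup>2)))) * \<mu>\<^sup>2
                  + \<mu> ^ 3 / (4 * sqrt (2 * exp 1 * pi))
                  + \<mu> ^ 4 / (32 * sqrt (2 * exp 1 * pi))
                  + 4.52 / (2.88 * sqrt (ln (real M)) - 2.41 / sqrt (ln (real M)))
                      * real M powr (-25/24)"
    and hup: "let \<mu> = sqrt ((exp (1/\<sigma>\<^sup>2) - 1) / (real M - 1));
                K = exp (1/\<sigma>\<^sup>2) * (1 + 4 * exp (-3/\<sigma>\<^sup>2)) / (1 - exp (-1/\<sigma>\<^sup>2))\<^sup>2
             in \<delta> + B * K * \<mu> \<le> 1/2 - Phi (- (exp (1/\<sigma>\<^sup>2) - 1) / 2)"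
  shows "(\<forall>a \<in> {0..1}. shuffle_tradeoff M \<sigma> a \<ge> 1 - a - \<delta>) \<and>
         (\<forall>E::nat. E \<ge> 1 \<longrightarrow>
            (\<forall>a \<in> {0..1}. shuffle_tradeoff_comp E M \<sigma> a \<ge> (1 - \<delta>) ^ E - a))"
proof -
  define x where "x = 1/\<sigma>\<^sup>2"
  have x0: "0 < x" using h\<sigma> by (simp add: x_def)
  define K where "K = exp x * (1 + 4 * exp (-3 * x)) / (1 - exp (-x))\<^sup>2"
  define \<mu> where "\<mu> = sqrt ((exp x - 1) / (real M - 1))"
  have Keq: "exp (1/\<sigma>\<^sup>2) * (1 + 4 * exp (-3/\<sigma>\<^sup>2)) / (1 - exp (-1/\<sigma>\<^sup>2))\<^sup>2 = K"
    by (simp add: K_def x_def)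
  have mueq: "sqrt ((exp (1/\<sigma>\<^sup>2) - 1) / (real M - 1)) = \<mu>" by (simp add: \<mu>_def x_def)
  define c where "c = 1 / (4 * sqrt (2*pi)) + 1 / (2 * sqrt (2 * exp 1 * pi))
                       * (1 + exp (1/\<sigma>\<^sup>2) / (1 - exp (-1/\<sigma>\<^sup>2)))"
  define L where "L = 4.52 / (2.88 * sqrt (ln (real M)) - 2.41 / sqrt (ln (real M))) * real M powr (-25/24)"
  have hl: "\<delta> \<ge> 2 * B * K * \<mu> + \<mu> / sqrt (2*pi) + c * \<mu>\<^sup>2 + \<mu> ^ 3 / (4 * sqrt (2 * exp 1 * pi))
                  + \<mu> ^ 4 / (32 * sqrt (2 * exp 1 * pi)) + L"
    using hlow unfolding Let_def Keq mueq c_def L_def .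
  have hu: "\<delta> + B * K * \<mu> \<le> 1/2 - Phi (- (exp (1/\<sigma>\<^sup>2) - 1) / 2)"
    using hup unfolding Let_def Keq mueq .
  have B8: "B \<ge> 1/8" by (rule B_lower[OF hB])
  have K4: "K \<ge> 4" unfolding K_def by (rule K_ge4[OF x0])
  have Mr: "real M \<ge> 2" using hM by simp
  have ex1: "exp x > 1" using x0 by simp
  have mu0: "\<mu> > 0" unfolding \<mu>_def using ex1 Mr by simp
  have Phi0: "Phi t \<ge> 0" for t by (simp add: Phi_def)
  have BK: "B * K \<ge> 1/8 * 4" using B8 K4 by (intro mult_mono) auto
  have BKmu0: "B * K * \<mu> \<ge> 0" using BK mu0 by simp
  have d1: "\<delta> \<le> 1/2" using hu Phi0[of "- (exp (1/\<sigma>\<^sup>2) - 1) / 2"] BKmu0 by linarith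
  have M3: "M \<ge> 3"
  proof (rule ccontr)
    assume "\<not> M \<ge> 3"
    then have M2: "M = 2" using hM by simp
    have "K * \<mu> \<ge> 8" using Kmu_ge8[OF x0] unfolding K_def \<mu>_def M2 by simp
    then have "B * (K * \<mu>) \<ge> 1/8 * 8" using B8 by (intro mult_mono) auto
    then have "B * K * \<mu> \<ge> 1" by (simp add: mult.assoc)
    then show False using hu Phi0[of "- (exp (1/\<sigma>\<^sup>2) - 1) / 2"] h\<delta> by linarith
  qed
  have lnM: "1 \<le> ln (real M)"
  proof -
    have "exp 1 \<le> real M" using exp_le M3 by linarith
    then show ?thesis using M3 by (subst ln_ge_iff) auto
  qed
  have sl: "1 \<le> sqrt (ln (real M))" using lnM by simp
  have n1: "(2.88::real) = 288/100" "(2.41::real) = 241/100" by simp_all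
  have f1: "241/100 / sqrt (ln (real M)) \<le> 241/100" using sl by (simp add: divide_le_eq)
  have f2: "288/100 \<le> 288/100 * sqrt (ln (real M))" using sl by simp
  have den: "0 < 2.88 * sqrt (ln (real M)) - 2.41 / sqrt (ln (real M))"
    unfolding n1 using f1 f2 by linarith
  have L0: "0 \<le> L" unfolding L_def using den by simp
  have em: "exp (-1/\<sigma>\<^sup>2) < 1" using h\<sigma> by simp
  have c0: "0 \<le> c" unfolding c_def using em by (intro add_nonneg_nonneg mult_nonneg_nonneg divide_nonneg_nonneg) auto
  have t2: "0 \<le> \<mu> / sqrt (2*pi)" using mu0 by simp
  have t3: "0 \<le> c * \<mu>\<^sup>2" using c0 by simp
  have t4: "0 \<le> \<mu> ^ 3 / (4 * sqrt (2 * exp 1 * pi))" using mu0 by simp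
  have t5: "0 \<le> \<mu> ^ 4 / (32 * sqrt (2 * exp 1 * pi))" using mu0 by simp
  have "1 * \<mu> \<le> (2 * (B * K)) * \<mu>" using BK mu0 by (intro mult_right_mono) auto
  then have t1: "\<mu> \<le> 2 * B * K * \<mu>" by (simp add: mult.assoc)
  have dmu: "\<mu> \<le> \<delta>" using hl t1 t2 t3 t4 t5 L0 by linarith
  have mu2: "\<mu>\<^sup>2 = (exp x - 1) / (real M - 1)" unfolding \<mu>_def using ex1 Mr by simp
  have chi: "(exp ((1/\<sigma>)\<^sup>2) - 1) / real M \<le> \<mu>\<^sup>2"
  proof -
    have "(exp ((1/\<sigma>)\<^sup>2) - 1) / real M = (exp x - 1) / real M" by (simp add: x_def power_one_over)
    also have "\<dots> \<le> (exp x - 1) / (real M - 1)" using ex1 Mr by (intro divide_left_mono) auto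
    finally show ?thesis unfolding mu2 .
  qed
  have M1: "1 \<le> M" using hM by simp
  show ?thesis
  proof (intro conjI ballI allI impI)
    fix a :: real assume "a \<in> {0..1}"
    then have a0: "0 \<le> a" by simp
    have "shuffle_tradeoff M \<sigma> a \<ge> 1 - \<mu> - a" by (rule single_bound[OF M1 mu0 chi a0])
    then show "shuffle_tradeoff M \<sigma> a \<ge> 1 - a - \<delta>" using dmu by linarith
  next
    fix E :: nat and a :: real assume "1 \<le> E" "a \<in> {0..1}"
    then have a0: "0 \<le> a" by simp
    have mu1: "\<mu> \<le> 1" using dmu d1 by linarith
    have "shuffle_tradeoff_comp E M \<sigma> a \<ge> (1 - \<mu>) ^ E - a" by (rule comp_bound[OF M1 mu0 chi mu1 a0])
    moreover have "(1 - \<delta>) ^ E \<le> (1 - \<mu>) ^ E" by (rule power_mono) (use dmu d1 in auto)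
    ultimately show "shuffle_tradeoff_comp E M \<sigma> a \<ge> (1 - \<delta>) ^ E - a" by linarith
  qed
qed

end
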